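(* For every complex $s$ with $\Re(s)>4$, \[\sum_{k=1}^\infty k^2\,\zeta(s,2k)=\tfrac{1}{24}\Big\{(3\cdot 2^{1-s}-1) \zeta(s-1)+6\cdot 2^{1-s} \zeta(s-2)+\zeta(s-3)\Big\}.\]
   Context: $\zeta(s,\alpha)=\sum_{n=0}^\infty (n+\alpha)^{-s}$ denotes the Hurwitz zeta function ($\Re(s)>1$, $\alpha>0$), and $\zeta(s)=\zeta(s,1)$ is the Riemann zeta function. *)

theory Defs
  imports "HOL-Analysis.Analysis"
begin

text \<open>Hurwitz zeta function, defined by its series (meaningful for Re s > 1, a > 0).\<close>
definition hurwitz_zeta :: "complex \<Rightarrow> real \<Rightarrow> complex" where
  "hurwitz_zeta s a = (\<Sum>n. complex_of_real (real n + a) powr (- s))"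

definition riemann_zeta :: "complex \<Rightarrow> complex" where
  "riemann_zeta s = hurwitz_zeta s 1"

end

theory Submission
  imports Defs
begin

lemma sumsq: "6 * (\<Sum>k<j. (Suc k)^2) = j*(j+1)*(2*j+1)"
  by (induction j) (auto simp: algebra_simps power2_eq_square)

lemma sumsq24: "24 * int (\<Sum>k<m div 2. (Suc k)^2) =
   int m^3 - int m + (if even m then 3*int m^2 + 3*int m else 0)"
proof -
  have A: "6 * int (\<Sum>k<j. (Suc k)^2) = int j*(int j+1)*(2*int j+1)" for j
  proof -
    have "int (6 * (\<Sum>k<j. (Suc k)^2)) = int (j*(j+1)*(2*j+1))" using sumsq[of j] by (rule arg_cong)
    thus ?thesis by (simp only: of_nat_mult of_nat_add of_nat_1 of_nat_numeral)
  qed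
  obtain j where "m = 2*j \<or> m = 2*j+1" by (metis dvd_mult_div_cancel odd_two_times_div_two_succ)
  then show ?thesis
  proof
    assume m: "m = 2*j"
    have "m div 2 = j" using m by simp
    then show ?thesis using A[of j] m by (simp add: algebra_simps power2_eq_square power3_eq_cube)
  next
    assume m: "m = 2*j+1"
    have "m div 2 = j" using m by simp
    then show ?thesis using A[of j] m by (simp add: algebra_simps power2_eq_square power3_eq_cube)
  qed
qed

lemma powr_shift:
  fixes x s :: complex
  assumes "x \<noteq> 0"
  shows "x powr (-(s - of_nat j)) = x ^ j * x powr (-s)"
proof -
  have "-(s - of_nat j) = -s + of_nat j" by simp
  then have "x powr (-(s - of_nat j)) = x powr (-s) * x powr (of_nat j)"
    by (metis powr_add)
  also have "\<dots> = x powr (-s) * x ^ j" using assms by (simp add: powr_nat')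
  finally show ?thesis by simp
qed

lemma zeta_has_sum:
  assumes "Re z > 1"
  shows "((\<lambda>m::nat. complex_of_real (real m) powr (-z)) has_sum riemann_zeta z) UNIV"
proof -
  let ?f = "\<lambda>m::nat. complex_of_real (real m) powr (-z)"
  have nf: "norm (?f m) = real m powr (- Re z)" for m
    by (subst norm_powr_real_powr) auto
  have ns: "summable (\<lambda>m. norm (?f m))"
    unfolding nf using summable_real_powr_iff[of "-Re z"] assms by simp
  have s1: "summable (\<lambda>n. ?f (Suc n))"
  proof (rule summable_norm_cancel)
    show "summable (\<lambda>n. norm (?f (Suc n)))" by (rule iffD2[OF summable_Suc_iff[where f="\<lambda>m. norm (?f m)"] ns])
  qed
  have eq: "(\<lambda>n. ?f (Suc n)) = (\<lambda>n. complex_of_real (real n + 1) powr (-z))"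
    by (simp add: add.commute)
  have sz: "(\<lambda>n. ?f (Suc n)) sums riemann_zeta z"
    using s1 unfolding eq riemann_zeta_def hurwitz_zeta_def by (simp add: summable_sums)
  have "?f sums (riemann_zeta z + ?f 0)" by (rule sums_Suc[where f="?f", OF sz])
  then have "?f sums riemann_zeta z" by simp
  then show ?thesis by (rule norm_summable_imp_has_sum[OF ns])
qed

lemma even_has_sum:
  assumes "Re z > 1"
  shows "((\<lambda>m::nat. if even m then complex_of_real (real m) powr (-z) else 0)
           has_sum (2 powr (-z) * riemann_zeta z)) UNIV"
proof -
  have 1: "((\<lambda>j::nat. 2 powr (-z) * complex_of_real (real j) powr (-z))
           has_sum (2 powr (-z) * riemann_zeta z)) UNIV"
    by (rule has_sum_cmult_right[OF zeta_has_sum[OF assms]])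
  have 2: "2 powr (-z) * complex_of_real (real j) powr (-z) = complex_of_real (real (2*j)) powr (-z)" for j
  proof -
    have "complex_of_real (real (2*j)) = 2 * complex_of_real (real j)" by simp
    then show ?thesis by (simp del: of_real_of_nat_eq) (subst powr_times_real; simp)
  qed
  have 3: "((\<lambda>m. complex_of_real (real m) powr (-z)) has_sum (2 powr (-z) * riemann_zeta z)) {m. even m}"
    using 1 unfolding 2
    by (subst has_sum_reindex_bij_witness[of UNIV "\<lambda>m. m div 2" "\<lambda>j. 2*j" "{m. even m}",
          symmetric]) auto
  show ?thesis
    by (rule has_sum_cong_neutral[where T="{m. even m}" and S=UNIV, THEN iffD2]) (use 3 in auto)
qed

lemma hz_has_sum:
  assumes "Re s > 1"
  shows "((\<lambda>m::nat. complex_of_real (real m) powr (-s)) has_sum hurwitz_zeta s (real c)) {c..}"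
proof -
  let ?P = "\<lambda>m::nat. complex_of_real (real m) powr (-s)"
  have "?P summable_on UNIV" using zeta_has_sum[OF assms] has_sum_imp_summable by blast
  then have "?P summable_on {c..}" by (rule summable_on_subset_banach) auto
  moreover have im: "{c..} = (\<lambda>n. n + c) ` UNIV"
  proof (intro equalityI subsetI)
    fix x assume "x \<in> {c..}" then have "x = (x - c) + c" by simp
    then show "x \<in> range (\<lambda>n. n + c)" by blast
  qed auto
  ultimately have "(?P \<circ> (\<lambda>n. n + c)) summable_on UNIV"
    by (subst summable_on_reindex[symmetric]) (auto simp: inj_on_def)
  then have h: "((\<lambda>n. ?P (n + c)) has_sum infsum (\<lambda>n. ?P (n + c)) UNIV) UNIV"
    by (simp add: o_def)
  then have "(\<lambda>n. ?P (n + c)) sums infsum (\<lambda>n. ?P (n + c)) UNIV" by (rule has_sum_imp_sums)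
  then have "infsum (\<lambda>n. ?P (n + c)) UNIV = hurwitz_zeta s (real c)"
    unfolding hurwitz_zeta_def by (simp add: sums_iff)
  with h have "((?P \<circ> (\<lambda>n. n + c)) has_sum hurwitz_zeta s (real c)) UNIV" by (simp add: o_def)
  then show ?thesis unfolding im
    by (subst has_sum_reindex) (auto simp: inj_on_def)
qed


lemma has_sum_diff':
  fixes f g :: "'a \<Rightarrow> complex"
  assumes "(f has_sum a) A" "(g has_sum b) A"
  shows "((\<lambda>x. f x - g x) has_sum (a - b)) A"
  using has_sum_add[OF assms(1), of "\<lambda>x. - g x" "-b"] has_sum_uminus[where f=g and a="-b" and A=A] assms(2)
  by simp

lemma mem_div2: "((k::nat) < m div 2) = (2*k+2 \<le> m)" by auto

theorem mainTheorem11: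
  fixes s :: complex
  assumes "Re s > 4"
  shows "(\<lambda>k. (of_nat (Suc k))^2 * hurwitz_zeta s (2 * real (Suc k))) sums
    ((1/24) * ((3 * 2 powr (1 - s) - 1) * riemann_zeta (s - 1)
              + 6 * 2 powr (1 - s) * riemann_zeta (s - 2)
              + riemann_zeta (s - 3)))"
proof -
  let ?P = "\<lambda>m::nat. complex_of_real (real m) powr (-s)"
  let ?D1 = "SIGMA m:(UNIV::nat set). {..<m div 2}"
  let ?F = "\<lambda>(m::nat,k::nat). (of_nat (Suc k))^2 * ?P m"
  have s1: "Re s > 1" using assms by simp
  have nP: "norm (?P m) = real m powr (- Re s)" for m
    by (subst norm_powr_real_powr) auto
  have absF: "(\<lambda>x. norm (?F x)) summable_on ?D1"
  proof (rule summable_on_SigmaI[where g = "\<lambda>m. (\<Sum>k<m div 2. real (Suc k)^2) * real m powr (- Re s)"])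
    fix m :: nat assume "m \<in> UNIV"
    show "((\<lambda>k. norm (?F (m, k))) has_sum (\<Sum>k<m div 2. real (Suc k)^2) * real m powr (- Re s)) {..<m div 2}"
    proof (rule has_sum_finiteI)
      have "norm (?F (m, k)) = real (Suc k)^2 * real m powr (- Re s)" for k
        by (simp only: case_prod_conv norm_mult norm_power norm_of_nat nP)
      then show "(\<Sum>k<m div 2. real (Suc k)^2) * real m powr (- Re s) = (\<Sum>k<m div 2. norm (?F (m, k)))"
        by (simp only: sum_distrib_right)
    qed auto
  next
    show "(\<lambda>m. (\<Sum>k<m div 2. real (Suc k)^2) * real m powr (- Re s)) summable_on UNIV"
    proof (subst summable_on_UNIV_nonneg_real_iff)
      show "summable (\<lambda>m. (\<Sum>k<m div 2. real (Suc k)^2) * real m powr (- Re s))"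
      proof (rule summable_comparison_test'[where g = "\<lambda>m. real m powr (3 - Re s)" and N = 1])
        show "summable (\<lambda>m. real m powr (3 - Re s))"
          using summable_real_powr_iff[of "3 - Re s"] assms by simp
        fix n :: nat assume n1: "n \<ge> 1"
        have "(\<Sum>k<n div 2. real (Suc k)^2) \<le> (\<Sum>k<n div 2. real n ^ 2)"
        proof (intro sum_mono power_mono)
          fix k assume "k \<in> {..<n div 2}"
          then show "real (Suc k) \<le> real n" using div_le_dividend[of n 2] by simp
        qed auto
        also have "\<dots> = real (n div 2) * real n ^ 2" by simp
        also have "\<dots> \<le> real n * real n ^ 2"
          by (intro mult_right_mono) (auto simp: div_le_dividend)
        also have "\<dots> = real n ^ 3" by (simp add: power3_eq_cube power2_eq_square)
        finally have b: "(\<Sum>k<n div 2. real (Suc k)^2) \<le> real n ^ 3" .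
        have "real n powr (3 - Re s) = real n powr 3 * real n powr (- Re s)"
          by (metis diff_conv_add_uminus powr_add)
        also have "real n powr 3 = real n ^ 3" using n1 by (simp add: powr_realpow')
        finally have e: "real n powr (3 - Re s) = real n ^ 3 * real n powr (- Re s)" .
        show "norm ((\<Sum>k<n div 2. real (Suc k)^2) * real n powr (- Re s)) \<le> real n powr (3 - Re s)"
          unfolding e using b by (simp add: mult_right_mono sum_nonneg)
      qed
    qed (rule mult_nonneg_nonneg[OF sum_nonneg], auto)
  qed auto
  have sF: "?F summable_on ?D1" using absF abs_summable_summable by blast
  then obtain S where hS: "(?F has_sum S) ?D1" by (auto simp: summable_on_def)
  define T where "T m = (\<Sum>k<m div 2. (Suc k)^2)" for m :: nat
  have g1: "((\<lambda>m. of_nat (T m) * ?P m) has_sum S) UNIV"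
    by (rule has_sum_SigmaD[OF hS]) (auto simp: T_def sum_distrib_right intro!: has_sum_finiteI)
  let ?Q = "\<lambda>z (m::nat). complex_of_real (real m) powr (-z)"
  have gid: "of_nat (T m) * ?P m = (1/24) * (?Q (s-3) m - ?Q (s-1) m
       + 3 * (if even m then ?Q (s-2) m else 0) + 3 * (if even m then ?Q (s-1) m else 0))" for m
  proof (cases "m = 0")
    case True then show ?thesis by (simp add: T_def)
  next
    case False
    let ?x = "complex_of_real (real m)"
    have x0: "?x \<noteq> 0" using False by simp
    have q1: "?Q (s-1) m = ?x * ?P m" using powr_shift[OF x0, of s 1] by simp
    have q2: "?Q (s-2) m = ?x^2 * ?P m" using powr_shift[OF x0, of s 2] by simp
    have q3: "?Q (s-3) m = ?x^3 * ?P m" using powr_shift[OF x0, of s 3] by simp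
    have "of_int (24 * int (T m)) = (of_int (int m^3 - int m + (if even m then 3*int m^2 + 3*int m else 0)) :: complex)"
      using sumsq24[of m] unfolding T_def by (rule arg_cong)
    then have t: "24 * (of_nat (T m) :: complex) = ?x^3 - ?x + (if even m then 3*?x^2 + 3*?x else 0)"
      by simp
    have "of_nat (T m) * ?P m = (1/24) * ((24 * of_nat (T m)) * ?P m)" by simp
    also have "\<dots> = (1/24) * ((?x^3 - ?x + (if even m then 3*?x^2 + 3*?x else 0)) * ?P m)"
      by (subst t) (rule refl)
    also have "\<dots> = (1/24) * (?Q (s-3) m - ?Q (s-1) m
       + 3 * (if even m then ?Q (s-2) m else 0) + 3 * (if even m then ?Q (s-1) m else 0))"
      unfolding q1 q2 q3 by (cases "even m") (simp_all add: algebra_simps)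
    finally show ?thesis .
  qed
  have g2: "((\<lambda>m. of_nat (T m) * ?P m) has_sum (1/24) * (riemann_zeta (s-3) - riemann_zeta (s-1)
       + 3 * (2 powr (-(s-2)) * riemann_zeta (s-2)) + 3 * (2 powr (-(s-1)) * riemann_zeta (s-1)))) UNIV"
    unfolding gid
    by (intro has_sum_cmult_right has_sum_add has_sum_diff' zeta_has_sum even_has_sum) (use assms in auto)
  have e2: "(2::complex) powr (-(s-2)) = 2 * 2 powr (1-s)"
  proof -
    have "(2::complex) powr (-(s-2)) = 2 powr ((1-s) + 1)"
      by (rule arg_cong[where f="\<lambda>z. (2::complex) powr z"]) simp
    also have "\<dots> = 2 powr (1-s) * 2 powr 1" by (rule powr_add)
    finally show ?thesis by simp
  qed
  have e1: "(2::complex) powr (-(s-1)) = 2 powr (1-s)" by simp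
  have SE: "S = (1/24) * ((3 * 2 powr (1 - s) - 1) * riemann_zeta (s - 1)
              + 6 * 2 powr (1 - s) * riemann_zeta (s - 2)
              + riemann_zeta (s - 3))"
    using has_sum_unique[OF g1 g2] unfolding e1 e2 by (simp add: algebra_simps)
  let ?D2 = "SIGMA k:(UNIV::nat set). {2*k+2..}"
  let ?G = "\<lambda>(k::nat,m::nat). (of_nat (Suc k))^2 * ?P m"
  have hS2: "(?G has_sum S) ?D2"
    using hS by (subst has_sum_reindex_bij_witness[of ?D2 prod.swap prod.swap ?D1 ?F ?G S S])
      (auto simp: mem_div2)
  have inner2: "((\<lambda>m. ?G (k,m)) has_sum (of_nat (Suc k))^2 * hurwitz_zeta s (2 * real (Suc k))) {2*k+2..}" for k
  proof -
    have "real (2*k+2) = 2 * real (Suc k)" by simp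
    then show ?thesis using has_sum_cmult_right[OF hz_has_sum[OF s1, of "2*k+2"], of "(of_nat (Suc k))^2"]
      by simp
  qed
  have "((\<lambda>k. (of_nat (Suc k))^2 * hurwitz_zeta s (2 * real (Suc k))) has_sum S) UNIV"
    by (rule has_sum_SigmaD[OF hS2 inner2])
  then show ?thesis unfolding SE by (rule has_sum_imp_sums)
qed

end
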